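(* Let $\tau\colon k[y]\otimes k[x]\to k[x]\otimes k[y]$ be the twisting map \[\tau(y^m\otimes x^n)=\sum_{i=0}^n\binom{n}{i}\frac{(m+n-i-1)!}{(m-1)!}\,x^i\otimes y^{m+n-i},\] so that $k[x]\otimes_\tau k[y]$ is the Jordan plane $J=k\langle x,y\mid yx-xy=y^2\rangle$. Then $\tau$ is continuous as a map $k[y]\otimes^!k[x]\to k[x]\otimes^!k[y]$ (for the cofinite topologies on $k[x]$ and $k[y]$) if and only if $k$ has positive characteristic.
   Context: $k$ is a field with the discrete topology; the integer $\frac{(m+n-i-1)!}{(m-1)!}$ is interpreted in $k$ (with $y^0\otimes x^n\mapsto x^n\otimes 1$, i.e. $\tau$ restricts to the swap on $1\otimes k[x]$). For an algebra $R$, the cofinite topology is the linear topology whose open subspaces are those containing a two-sided ideal of finite codimension. For linearly topologized spaces $E,F$, $E\otimes^!F$ is $E\otimes F$ with the linear topology whose open subspaces contain $E_0\otimes F+E\otimes F_0$ for some open subspaces $E_0\subseteq E$, $F_0\subseteq F$. $k[x]\otimes_\tau k[y]$ is $k[x]\otimes k[y]$ with multiplication $(m\otimes m)\circ(\mathrm{id}\otimes\tau\otimes\mathrm{id})$. *)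

theory Defs
  imports "HOL-Analysis.Abstract_Topology" "HOL-Computational_Algebra.Polynomial"
begin

definition ksub :: "('a \<Rightarrow> 'v \<Rightarrow> 'v) \<Rightarrow> 'v::ab_group_add set \<Rightarrow> bool" where
  "ksub sc S \<longleftrightarrow> 0 \<in> S \<and> (\<forall>u\<in>S. \<forall>v\<in>S. u + v \<in> S) \<and> (\<forall>c u. u \<in> S \<longrightarrow> sc c u \<in> S)"

definition kspan :: "('a \<Rightarrow> 'v \<Rightarrow> 'v) \<Rightarrow> 'v::ab_group_add set \<Rightarrow> 'v set" where
  "kspan sc S = \<Inter>{T. ksub sc T \<and> S \<subseteq> T}"

definition two_sided_ideal :: "'r::ring set \<Rightarrow> bool" where
  "two_sided_ideal I \<longleftrightarrow> 0 \<in> I \<and> (\<forall>a\<in>I. \<forall>b\<in>I. a + b \<in> I) \<and> (\<forall>a\<in>I. - a \<in> I)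
     \<and> (\<forall>a\<in>I. \<forall>r. r * a \<in> I \<and> a * r \<in> I)"

definition fin_codim :: "('a \<Rightarrow> 'v \<Rightarrow> 'v) \<Rightarrow> 'v::ab_group_add set \<Rightarrow> bool" where
  "fin_codim sc W \<longleftrightarrow> (\<exists>B. finite B \<and> kspan sc (B \<union> W) = UNIV)"

definition cofinite_open :: "'a::field poly set \<Rightarrow> bool" where
  "cofinite_open U \<longleftrightarrow> ksub smult U \<and>
     (\<exists>I. two_sided_ideal I \<and> fin_codim smult I \<and> I \<subseteq> U)"

text \<open>The tensor product k[s] \<otimes> k[t] is represented by 'a poly poly: the outer
  variable is the first tensor factor, the coefficients (polynomials) the second factor;
  so s^i \<otimes> t^j corresponds to monom (monom 1 j) i.\<close>
definition tsc :: "'a::field \<Rightarrow> 'a poly poly \<Rightarrow> 'a poly poly" where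
  "tsc c t = smult [:c:] t"

definition tens :: "'a::field poly \<Rightarrow> 'a poly \<Rightarrow> 'a poly poly" where
  "tens p q = map_poly (\<lambda>c. smult c q) p"

text \<open>Open subspaces of E \<otimes>^! F, given the open subspaces OE of E and OF of F.\<close>
definition bang_open :: "('a::field poly set \<Rightarrow> bool) \<Rightarrow> ('a poly set \<Rightarrow> bool) \<Rightarrow> 'a poly poly set \<Rightarrow> bool" where
  "bang_open OE OF U \<longleftrightarrow> ksub tsc U \<and>
     (\<exists>E0 F0. OE E0 \<and> OF F0 \<and>
        kspan tsc ((\<lambda>(e, f). tens e f) ` (E0 \<times> UNIV \<union> UNIV \<times> F0)) \<subseteq> U)"

definition linear_topology :: "('v::ab_group_add set \<Rightarrow> bool) \<Rightarrow> 'v topology" where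
  "linear_topology OP = topology (\<lambda>S. \<forall>v\<in>S. \<exists>U. OP U \<and> (\<lambda>u. v + u) ` U \<subseteq> S)"

definition tau_coeff :: "nat \<Rightarrow> nat \<Rightarrow> nat \<Rightarrow> 'a::field" where
  "tau_coeff m n i = (if m = 0 then (if i = n then 1 else 0)
      else of_nat (n choose i) * of_nat (fact (m + n - i - 1) div fact (m - 1) :: nat))"

definition tau_basis :: "nat \<Rightarrow> nat \<Rightarrow> 'a::field poly poly" where
  "tau_basis m n = (\<Sum>i\<le>n. monom (monom (tau_coeff m n i) (m + n - i)) i)"

definition tau :: "'a::field poly poly \<Rightarrow> 'a poly poly" where
  "tau t = (\<Sum>m\<le>degree t. \<Sum>n\<le>degree (coeff t m).
              smult [:coeff (coeff t m) n:] (tau_basis m n))"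

end

theory Submission
  imports Defs
begin


lemma ksub_kspan: "ksub sc (kspan sc S)"
  unfolding ksub_def kspan_def by auto

lemma kspan_sup: "S \<subseteq> kspan sc S"
  unfolding kspan_def by auto

lemma kspan_least: "ksub sc T \<Longrightarrow> S \<subseteq> T \<Longrightarrow> kspan sc S \<subseteq> T"
  unfolding kspan_def by auto

lemma ksub_sum: "ksub sc T \<Longrightarrow> (\<And>i. i \<in> A \<Longrightarrow> f i \<in> T) \<Longrightarrow> sum f A \<in> T"
proof (induction A rule: infinite_finite_induct)
  case (infinite A) then show ?case by (simp add: ksub_def)
next
  case empty then show ?case by (simp add: ksub_def)
next
  case (insert x F) then show ?case by (simp add: ksub_def)
qed

lemma ksub_add: "ksub sc T \<Longrightarrow> u \<in> T \<Longrightarrow> v \<in> T \<Longrightarrow> u + v \<in> T"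
  unfolding ksub_def by blast
lemma ksub_sc: "ksub sc T \<Longrightarrow> u \<in> T \<Longrightarrow> sc c u \<in> T"
  unfolding ksub_def by blast
lemma ksub_0: "ksub sc T \<Longrightarrow> 0 \<in> T"
  unfolding ksub_def by blast

lemma ksub_UNIV: "ksub sc UNIV" by (simp add: ksub_def)

lemma ksub_Int: "ksub sc S \<Longrightarrow> ksub sc T \<Longrightarrow> ksub sc (S \<inter> T)"
  by (simp add: ksub_def)

lemma principal_ksub: "ksub smult (range (\<lambda>h. (f::'a::field poly) * h))"
  unfolding ksub_def
proof (intro conjI ballI allI impI)
  show "0 \<in> range (\<lambda>h. f * h)" by (rule image_eqI[where x=0]) simp_all
next
  fix u v assume "u \<in> range (\<lambda>h. f * h)" "v \<in> range (\<lambda>h. f * h)"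
  then obtain a b where "u = f * a" "v = f * b" by blast
  then have "u + v = f * (a + b)" by (simp add: distrib_left)
  then show "u + v \<in> range (\<lambda>h. f * h)" by blast
next
  fix c u assume "u \<in> range (\<lambda>h. f * h)"
  then obtain a where "u = f * a" by blast
  then have "smult c u = f * smult c a" by simp
  then show "smult c u \<in> range (\<lambda>h. f * h)" by blast
qed

lemma principal_ideal: "two_sided_ideal (range (\<lambda>h. (f::'a::field poly) * h))"
  unfolding two_sided_ideal_def
proof (intro conjI ballI allI)
  show "0 \<in> range (\<lambda>h. f * h)" by (rule image_eqI[where x=0]) simp_all
next
  fix u v assume "u \<in> range (\<lambda>h. f * h)" "v \<in> range (\<lambda>h. f * h)"
  then obtain a b where "u = f * a" "v = f * b" by blast
  then have "u + v = f * (a + b)" by (simp add: distrib_left)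
  then show "u + v \<in> range (\<lambda>h. f * h)" by blast
next
  fix u assume "u \<in> range (\<lambda>h. f * h)"
  then obtain a where "u = f * a" by blast
  then have "- u = f * (- a)" by simp
  then show "- u \<in> range (\<lambda>h. f * h)" by blast
next
  fix u r assume "u \<in> range (\<lambda>h. f * h)"
  then obtain a where "u = f * a" by blast
  then have "r * u = f * (r * a)" "u * r = f * (a * r)" by (simp_all add: ac_simps)
  then show "r * u \<in> range (\<lambda>h. f * h)" "u * r \<in> range (\<lambda>h. f * h)" by blast+
qed

lemma principal_span:
  fixes f p :: "'a::field poly"
  assumes "f \<noteq> 0"
  shows "p \<in> kspan smult ((\<lambda>i. monom (1::'a) i) ` {..<degree f} \<union> range (\<lambda>h. f * h))"
    (is "_ \<in> ?T")
proof -
  have T: "ksub smult ?T" by (rule ksub_kspan)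
  have sup: "(\<lambda>i. monom (1::'a) i) ` {..<degree f} \<union> range (\<lambda>h. f * h) \<subseteq> ?T" by (rule kspan_sup)
  define r where "r = p mod f"
  have rdeg: "coeff r n = 0" if "n \<ge> degree f" for n
  proof (cases "r = 0")
    case False
    then have "degree r < degree f" unfolding r_def
      by (rule degree_mod_less'[OF assms])
    then show ?thesis using that by (simp add: coeff_eq_0)
  qed simp
  have req: "r = (\<Sum>i<degree f. smult (coeff r i) (monom 1 i))"
    by (rule poly_eqI) (auto simp: coeff_sum smult_monom rdeg not_less)
  have "r \<in> ?T" apply (subst req)
  proof (rule ksub_sum[OF T])
    fix i assume "i \<in> {..<degree f}"
    then have "monom 1 i \<in> ?T" using sup by blast
    then show "smult (coeff r i) (monom 1 i) \<in> ?T" by (rule ksub_sc[OF T])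
  qed
  moreover have "f * (p div f) \<in> ?T" using sup by blast
  ultimately have "r + f * (p div f) \<in> ?T" by (rule ksub_add[OF T])
  moreover have "r + f * (p div f) = p" unfolding r_def by (metis add.commute mult_div_mod_eq)
  ultimately show "p \<in> ?T" by simp
qed

lemma principal_fin_codim:
  fixes f :: "'a::field poly"
  assumes "f \<noteq> 0"
  shows "fin_codim smult (range (\<lambda>h. f * h))"
proof -
  let ?B = "(\<lambda>i. monom (1::'a) i) ` {..<degree f}"
  have "kspan smult (?B \<union> range (\<lambda>h. f * h)) = UNIV"
    using principal_span[OF assms] by blast
  moreover have "finite ?B" by simp
  ultimately show ?thesis unfolding fin_codim_def by blast
qed

lemma fin_codim_nonzero:
  fixes I :: "'a::field poly set"
  assumes "fin_codim smult I"
  shows "\<exists>f\<in>I. f \<noteq> 0"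
proof (rule ccontr)
  assume "\<not> ?thesis"
  then have I0: "I \<subseteq> {0}" by auto
  obtain B where B: "finite B" "kspan smult (B \<union> I) = UNIV"
    using assms unfolding fin_codim_def by blast
  define N where "N = (\<Sum>b\<in>B. degree b)"
  let ?T = "{p :: 'a poly. degree p \<le> N}"
  have "ksub smult ?T" unfolding ksub_def
  proof (intro conjI ballI allI impI)
    fix u v assume "u \<in> ?T" "v \<in> ?T"
    then show "u + v \<in> ?T" using degree_add_le by auto
  next
    fix c u assume "u \<in> ?T"
    then show "smult c u \<in> ?T" using degree_smult_le[of c u] by auto
  qed simp
  moreover have "B \<union> I \<subseteq> ?T"
  proof
    fix p assume "p \<in> B \<union> I"
    then show "p \<in> ?T"
    proof
      assume "p \<in> B" then show ?thesis using B(1) unfolding N_def by (simp add: member_le_sum)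
    next
      assume "p \<in> I" then show ?thesis using I0 by auto
    qed
  qed
  ultimately have "kspan smult (B \<union> I) \<subseteq> ?T" by (rule kspan_least)
  with B have "monom (1::'a) (Suc N) \<in> ?T" by blast
  then show False by (simp add: degree_monom_eq)
qed

lemma cofinite_open_iff:
  "cofinite_open (E :: 'a::field poly set) \<longleftrightarrow> ksub smult E \<and> (\<exists>f. f \<noteq> 0 \<and> (\<forall>h. f * h \<in> E))"
proof
  assume "cofinite_open E"
  then obtain I where I: "ksub smult E" "two_sided_ideal I" "fin_codim smult I" "I \<subseteq> E"
    unfolding cofinite_open_def by blast
  obtain f where f: "f \<in> I" "f \<noteq> 0" using fin_codim_nonzero[OF I(3)] by blast
  have "f * h \<in> E" for h using I(2,4) f(1) unfolding two_sided_ideal_def by blast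
  with I(1) f(2) show "ksub smult E \<and> (\<exists>f. f \<noteq> 0 \<and> (\<forall>h. f * h \<in> E))" by blast
next
  assume "ksub smult E \<and> (\<exists>f. f \<noteq> 0 \<and> (\<forall>h. f * h \<in> E))"
  then obtain f where "ksub smult E" "f \<noteq> 0" "\<forall>h. f * h \<in> E" by blast
  then show "cofinite_open E" unfolding cofinite_open_def
    using principal_ideal[of f] principal_fin_codim[of f] by blast
qed

abbreviation BO where "BO \<equiv> bang_open cofinite_open cofinite_open"

lemma BO_iff:
  "BO (U :: 'a::field poly poly set) \<longleftrightarrow> ksub tsc U \<and>
     (\<exists>f g. f \<noteq> 0 \<and> g \<noteq> 0 \<and> (\<forall>h a. tens (f * h) a \<in> U) \<and> (\<forall>b h. tens b (g * h) \<in> U))"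
proof
  assume "BO U"
  then obtain E0 F0 where U: "ksub tsc U" "cofinite_open E0" "cofinite_open F0"
    "kspan tsc ((\<lambda>(e, f). tens e f) ` (E0 \<times> UNIV \<union> UNIV \<times> F0)) \<subseteq> U"
    unfolding bang_open_def by blast
  obtain f where f: "f \<noteq> 0" "\<forall>h. f * h \<in> E0" using U(2) cofinite_open_iff by blast
  obtain g where g: "g \<noteq> 0" "\<forall>h. g * h \<in> F0" using U(3) cofinite_open_iff by blast
  have "tens (f * h) a \<in> U" for h a
  proof -
    have "tens (f * h) a \<in> (\<lambda>(e, f). tens e f) ` (E0 \<times> UNIV \<union> UNIV \<times> F0)"
      using f(2) by (intro image_eqI[where x="(f * h, a)"]) auto
    then show ?thesis using U(4) kspan_sup[of _ tsc] by (meson subsetD)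
  qed
  moreover have "tens b (g * h) \<in> U" for h b
  proof -
    have "tens b (g * h) \<in> (\<lambda>(e, f). tens e f) ` (E0 \<times> UNIV \<union> UNIV \<times> F0)"
      using g(2) by (intro image_eqI[where x="(b, g * h)"]) auto
    then show ?thesis using U(4) kspan_sup[of _ tsc] by (meson subsetD)
  qed
  ultimately show "ksub tsc U \<and>
     (\<exists>f g. f \<noteq> 0 \<and> g \<noteq> 0 \<and> (\<forall>h a. tens (f * h) a \<in> U) \<and> (\<forall>b h. tens b (g * h) \<in> U))"
    using U(1) f(1) g(1) by blast
next
  assume "ksub tsc U \<and>
     (\<exists>f g. f \<noteq> 0 \<and> g \<noteq> 0 \<and> (\<forall>h a. tens (f * h) a \<in> U) \<and> (\<forall>b h. tens b (g * h) \<in> U))"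
  then obtain f g where U: "ksub tsc U" "f \<noteq> 0" "g \<noteq> 0" "\<forall>h a. tens (f * h) a \<in> U" "\<forall>b h. tens b (g * h) \<in> U"
    by blast
  have "cofinite_open (range (\<lambda>h. f * h))"
    using U(2) principal_ksub[of f] cofinite_open_iff[of "range (\<lambda>h. f * h)"] by blast
  moreover have "cofinite_open (range (\<lambda>h. g * h))"
    using U(3) principal_ksub[of g] cofinite_open_iff[of "range (\<lambda>h. g * h)"] by blast
  moreover have "kspan tsc ((\<lambda>(e, f). tens e f) ` (range (\<lambda>h. f * h) \<times> UNIV \<union> UNIV \<times> range (\<lambda>h. g * h))) \<subseteq> U"
    using U(4,5) by (intro kspan_least[OF U(1)]) auto
  ultimately show "BO U" using U(1) unfolding bang_open_def by blast
qed



lemma BO_Int: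
  assumes "BO (U :: 'a::field poly poly set)" "BO V"
  shows "BO (U \<inter> V)"
proof -
  obtain f1 g1 where U: "ksub tsc U" "f1 \<noteq> 0" "g1 \<noteq> 0" "\<forall>h a. tens (f1 * h) a \<in> U" "\<forall>b h. tens b (g1 * h) \<in> U"
    using assms(1) unfolding BO_iff by blast
  obtain f2 g2 where V: "ksub tsc V" "f2 \<noteq> 0" "g2 \<noteq> 0" "\<forall>h a. tens (f2 * h) a \<in> V" "\<forall>b h. tens b (g2 * h) \<in> V"
    using assms(2) unfolding BO_iff by blast
  have "tens (f1 * f2 * h) a \<in> U \<inter> V" for h a
    using U(4)[rule_format, of "f2 * h" a] V(4)[rule_format, of "f1 * h" a]
    by (simp add: ac_simps)
  moreover have "tens b (g1 * g2 * h) \<in> U \<inter> V" for h b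
    using U(5)[rule_format, of b "g2 * h"] V(5)[rule_format, of b "g1 * h"]
    by (simp add: ac_simps)
  moreover have "f1 * f2 \<noteq> 0" "g1 * g2 \<noteq> 0" using U V by simp_all
  moreover have "ksub tsc (U \<inter> V)" using U(1) V(1) by (rule ksub_Int)
  ultimately show ?thesis unfolding BO_iff by blast
qed

lemma BO_UNIV: "BO (UNIV :: 'a::field poly poly set)"
  unfolding BO_iff by (auto simp: ksub_UNIV intro!: exI[where x=1])

definition LOP :: "'a::field poly poly set \<Rightarrow> bool" where
  "LOP S \<longleftrightarrow> (\<forall>v\<in>S. \<exists>U. BO U \<and> (\<lambda>u. v + u) ` U \<subseteq> S)"

lemma istop_LOP: "istopology (LOP :: 'a::field poly poly set \<Rightarrow> bool)"
  unfolding istopology_def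
proof (intro conjI allI impI)
  fix S T :: "'a poly poly set"
  assume S: "LOP S" and T: "LOP T"
  show "LOP (S \<inter> T)" unfolding LOP_def
  proof
    fix v assume "v \<in> S \<inter> T"
    then obtain U1 U2 where "BO U1" "(\<lambda>u. v + u) ` U1 \<subseteq> S" "BO U2" "(\<lambda>u. v + u) ` U2 \<subseteq> T"
      using S T unfolding LOP_def by blast
    then show "\<exists>U. BO U \<and> (\<lambda>u. v + u) ` U \<subseteq> S \<inter> T"
      by (intro exI[where x="U1 \<inter> U2"]) (auto simp: BO_Int)
  qed
next
  fix K :: "'a poly poly set set"
  assume K: "\<forall>S\<in>K. LOP S"
  show "LOP (\<Union>K)" unfolding LOP_def
  proof
    fix v assume "v \<in> \<Union>K"
    then obtain S where "S \<in> K" "v \<in> S" by blast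
    then obtain U where "BO U" "(\<lambda>u. v + u) ` U \<subseteq> S" using K unfolding LOP_def by blast
    then show "\<exists>U. BO U \<and> (\<lambda>u. v + u) ` U \<subseteq> \<Union>K" using \<open>S \<in> K\<close> by blast
  qed
qed

lemma openin_LT: "openin (linear_topology BO) S = LOP (S :: 'a::field poly poly set)"
proof -
  have "linear_topology BO = topology (LOP :: 'a poly poly set \<Rightarrow> bool)"
    unfolding linear_topology_def LOP_def[abs_def] by simp
  then show ?thesis by (simp add: topology_inverse'[OF istop_LOP])
qed

lemma topspace_LT: "topspace (linear_topology BO) = (UNIV :: 'a::field poly poly set)"
proof -
  have "LOP (UNIV :: 'a poly poly set)" unfolding LOP_def using BO_UNIV by blast
  then have "openin (linear_topology BO) (UNIV :: 'a poly poly set)" by (simp add: openin_LT)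
  then show ?thesis using openin_subset by blast
qed

lemma cont_iff:
  fixes F :: "'a::field poly poly \<Rightarrow> 'a poly poly"
  assumes add: "\<And>u v. F (u + v) = F u + F v"
  shows "continuous_map (linear_topology BO) (linear_topology BO) F \<longleftrightarrow>
         (\<forall>U. BO U \<longrightarrow> (\<exists>V. BO V \<and> F ` V \<subseteq> U))"
proof -
  have F0: "F 0 = 0" using add[of 0 0] by (metis add_cancel_right_right add_0)
  have cm: "continuous_map (linear_topology BO) (linear_topology BO) F \<longleftrightarrow>
        (\<forall>S. LOP S \<longrightarrow> LOP {x. F x \<in> S})"
    unfolding continuous_map_def topspace_LT openin_LT by simp
  show ?thesis unfolding cm
  proof (intro iffI allI impI)
    fix U :: "'a poly poly set"
    assume H: "\<forall>S. LOP S \<longrightarrow> LOP {x. F x \<in> S}" and U: "BO U"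
    have kU: "ksub tsc U" using U unfolding BO_iff by blast
    have "LOP U" unfolding LOP_def
    proof
      fix v assume "v \<in> U"
      then have "(\<lambda>u. v + u) ` U \<subseteq> U" using ksub_add[OF kU] by blast
      then show "\<exists>U'. BO U' \<and> (\<lambda>u. v + u) ` U' \<subseteq> U" using U by blast
    qed
    then have "LOP {x. F x \<in> U}" using H by blast
    moreover have "0 \<in> {x. F x \<in> U}" using F0 ksub_0[OF kU] by simp
    ultimately obtain V where "BO V" "(\<lambda>u. 0 + u) ` V \<subseteq> {x. F x \<in> U}"
      unfolding LOP_def by blast
    then show "\<exists>V. BO V \<and> F ` V \<subseteq> U" by auto
  next
    fix S :: "'a poly poly set"
    assume H: "\<forall>U. BO U \<longrightarrow> (\<exists>V. BO V \<and> F ` V \<subseteq> U)" and S: "LOP S"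
    show "LOP {x. F x \<in> S}" unfolding LOP_def
    proof
      fix v assume "v \<in> {x. F x \<in> S}"
      then obtain U where "BO U" "(\<lambda>u. F v + u) ` U \<subseteq> S" using S unfolding LOP_def by blast
      moreover obtain V where "BO V" "F ` V \<subseteq> U" using H \<open>BO U\<close> by blast
      ultimately have "(\<lambda>u. v + u) ` V \<subseteq> {x. F x \<in> S}" using add by blast
      then show "\<exists>V. BO V \<and> (\<lambda>u. v + u) ` V \<subseteq> {x. F x \<in> S}" using \<open>BO V\<close> by blast
    qed
  qed
qed



lemma smult_sum_right: "smult a (sum f A) = (\<Sum>i\<in>A. smult a (f i))"
  by (induction A rule: infinite_finite_induct) (simp_all add: smult_add_right)

lemma coeff_tens: "coeff (tens p q) i = smult (coeff p i) q"
  unfolding tens_def by (simp add: coeff_map_poly)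

lemma degree_tens: "degree (tens p q) \<le> degree p"
  unfolding tens_def by (rule map_poly_degree_leq)

lemma tens_add_left: "tens (p + p') q = tens p q + tens p' q"
  by (rule poly_eqI) (simp add: coeff_tens smult_add_left)

lemma tens_add_right: "tens p (q + q') = tens p q + tens p q'"
  by (rule poly_eqI) (simp add: coeff_tens smult_add_right)

lemma tens_sum_left: "tens (sum f A) q = (\<Sum>i\<in>A. tens (f i) q)"
  by (rule poly_eqI) (simp add: coeff_tens coeff_sum smult_sum)

lemma tens_sum_right: "tens p (sum f A) = (\<Sum>i\<in>A. tens p (f i))"
proof (induction A rule: infinite_finite_induct)
  case (infinite A) then show ?case by (intro poly_eqI) (simp add: coeff_tens)
next
  case empty then show ?case by (intro poly_eqI) (simp add: coeff_tens)
next
  case (insert x F) then show ?case by (simp add: tens_add_right)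
qed

lemma tens_smult_left: "tens (smult c p) q = tens p (smult c q)"
  by (rule poly_eqI) (simp add: coeff_tens mult.commute)

lemma tens_monom: "tens (monom a i) (monom b j) = monom (monom (a * b) j) i"
  by (rule poly_eqI) (simp add: coeff_tens smult_monom)

definition bnd :: "'a::zero poly poly \<Rightarrow> nat" where
  "bnd t = (\<Sum>m\<le>degree t. degree (coeff t m))"

lemma bnd_ge: "degree (coeff t m) \<le> bnd t"
proof (cases "m \<le> degree t")
  case True then show ?thesis unfolding bnd_def
    by (intro member_le_sum[where f="\<lambda>m. degree (coeff t m)", of m "{..degree t}", simplified]) auto
next
  case False then show ?thesis by (simp add: coeff_eq_0)
qed

lemma tau_ext:
  fixes t :: "'a::field poly poly"
  assumes M: "degree t \<le> M" and N: "\<And>m. degree (coeff t m) \<le> N"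
  shows "tau t = (\<Sum>m\<le>M. \<Sum>n\<le>N. smult [:coeff (coeff t m) n:] (tau_basis m n))"
proof -
  have inner: "(\<Sum>n\<le>degree (coeff t m). smult [:coeff (coeff t m) n:] (tau_basis m n :: 'a poly poly))
      = (\<Sum>n\<le>N. smult [:coeff (coeff t m) n:] (tau_basis m n))" for m
    using N[of m] by (intro sum.mono_neutral_left) (auto simp: coeff_eq_0)
  have "tau t = (\<Sum>m\<le>degree t. \<Sum>n\<le>N. smult [:coeff (coeff t m) n:] (tau_basis m n))"
    unfolding tau_def inner ..
  also have "\<dots> = (\<Sum>m\<le>M. \<Sum>n\<le>N. smult [:coeff (coeff t m) n:] (tau_basis m n))"
    using M by (intro sum.mono_neutral_left) (auto simp: coeff_eq_0)
  finally show ?thesis .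
qed

lemma tau_add: "tau (s + t) = tau s + tau (t :: 'a::field poly poly)"
proof -
  let ?M = "degree s + degree t" and ?N = "bnd s + bnd t"
  have ds: "degree s \<le> ?M" and dt: "degree t \<le> ?M" by simp_all
  have dst: "degree (s + t) \<le> ?M" using degree_add_le[of s ?M t] by simp
  have Ns: "degree (coeff s m) \<le> ?N" for m using bnd_ge[of s m] by simp
  have Nt: "degree (coeff t m) \<le> ?N" for m using bnd_ge[of t m] by simp
  have Nst: "degree (coeff (s + t) m) \<le> ?N" for m
    using degree_add_le[OF Ns Nt, of m m] by simp
  show ?thesis
    unfolding tau_ext[OF ds Ns] tau_ext[OF dt Nt] tau_ext[OF dst Nst]
    by (simp add: sum.distrib[symmetric] smult_add_left[symmetric])
qed

lemma tau_tsc: "tau (tsc c t) = tsc c (tau (t :: 'a::field poly poly))"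
proof -
  have d: "degree (tsc c t) \<le> degree t" unfolding tsc_def by (rule degree_smult_le)
  have d0: "degree t \<le> degree t" by simp
  have N: "degree (coeff (tsc c t) m) \<le> bnd t" for m
    using bnd_ge[of t m] degree_smult_le[of c "coeff t m"] unfolding tsc_def by simp
  have "tau (tsc c t) = (\<Sum>m\<le>degree t. \<Sum>n\<le>bnd t. smult [:coeff (coeff (tsc c t) m) n:] (tau_basis m n))"
    by (rule tau_ext[OF d N])
  also have "\<dots> = tsc c (\<Sum>m\<le>degree t. \<Sum>n\<le>bnd t. smult [:coeff (coeff t m) n:] (tau_basis m n))"
    unfolding tsc_def by (simp add: smult_sum_right smult_smult mult.commute)
  also have "\<dots> = tsc c (tau t)" by (subst tau_ext[OF d0 bnd_ge]) (rule refl)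
  finally show ?thesis .
qed



definition dl :: "'a::field poly \<Rightarrow> 'a poly" where
  "dl q = monom 1 2 * pderiv q"

lemma dl_add: "dl (p + q) = dl p + dl q"
  unfolding dl_def by (simp add: pderiv_add distrib_left)

lemma dl_0: "dl 0 = 0" unfolding dl_def by simp

lemma dlpow_add: "(dl ^^ k) (p + q) = (dl ^^ k) p + (dl ^^ k) q"
  by (induction k) (simp_all add: dl_add)

lemma dlpow_0: "(dl ^^ k) 0 = 0"
  by (induction k) (simp_all add: dl_0)

lemma dlpow_sum: "(dl ^^ k) (sum f A) = (\<Sum>i\<in>A. (dl ^^ k) (f i))"
  by (induction A rule: infinite_finite_induct) (simp_all add: dlpow_add dlpow_0)

lemma dl_monom: "dl (monom c m) = monom (of_nat m * c) (m + 1)"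
proof (cases m)
  case 0 then show ?thesis by (simp add: dl_def pderiv_monom)
next
  case (Suc j) then show ?thesis by (simp add: dl_def pderiv_monom mult_monom)
qed

lemma dlpow_monom: "(dl ^^ k) (monom c m) = monom (c * pochhammer (of_nat m) k) (m + k)"
proof (induction k)
  case 0 then show ?case by simp
next
  case (Suc k)
  then show ?case by (simp add: dl_monom pochhammer_Suc algebra_simps)
qed

lemma pdpow_monom: "(pderiv ^^ k) (monom a n) = monom (a * of_nat (fact k * (n choose k))) (n - k)"
proof (induction k)
  case 0 then show ?case by simp
next
  case (Suc k)
  have e: "(n - k) * (fact k * (n choose k)) = fact (Suc k) * (n choose Suc k)"
  proof -
    have h: "(n - k) * (n choose k) = Suc k * (n choose Suc k)"
      using binomial_absorb_comp[of n k] binomial_absorption[of k n] by (simp only:)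
    have "(n - k) * (fact k * (n choose k)) = fact k * ((n - k) * (n choose k))"
      by (simp only: mult.left_commute)
    also have "\<dots> = fact k * (Suc k * (n choose Suc k))" by (simp only: h)
    also have "\<dots> = fact (Suc k) * (n choose Suc k)" by (simp only: fact_Suc of_nat_id mult.assoc mult.commute mult.left_commute)
    finally show ?thesis .
  qed
  have "(pderiv ^^ Suc k) (monom a n) = pderiv (monom (a * of_nat (fact k * (n choose k))) (n - k))"
    using Suc by simp
  also have "\<dots> = monom (of_nat (n - k) * (a * of_nat (fact k * (n choose k)))) (n - k - 1)"
    by (simp add: pderiv_monom)
  also have "of_nat (n - k) * (a * of_nat (fact k * (n choose k))) = a * of_nat ((n - k) * (fact k * (n choose k)))"
    by (simp only: of_nat_mult) (simp add: algebra_simps)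
  also note e
  finally show ?case by simp
qed

lemma fact_div_poch: "m \<ge> 1 \<Longrightarrow> fact (m + j - 1) div fact (m - 1) = (pochhammer m j :: nat)"
proof -
  assume "m \<ge> 1"
  have "(fact (m - 1 + j) :: nat) = pochhammer 1 (m - 1 + j)" by (rule pochhammer_fact)
  also have "\<dots> = pochhammer 1 (m - 1) * pochhammer (1 + of_nat (m - 1)) j" by (rule pochhammer_product')
  also have "pochhammer (1::nat) (m - 1) = fact (m - 1)" by (rule pochhammer_fact[symmetric])
  also have "(1::nat) + of_nat (m - 1) = m" using \<open>m \<ge> 1\<close> by simp
  finally have "fact (m + j - 1) = (fact (m - 1) :: nat) * pochhammer m j"
    using \<open>m \<ge> 1\<close> by (simp add: add.commute)
  then show ?thesis by simp
qed

lemma tau_coeff_eq: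
  assumes "i \<le> n"
  shows "tau_coeff m n i = (of_nat (n choose i) * pochhammer (of_nat m) (n - i) :: 'a::field)"
proof (cases "m = 0")
  case True
  then show ?thesis using assms by (auto simp: tau_coeff_def pochhammer_0_left)
next
  case False
  then have "fact (m + n - i - 1) div fact (m - 1) = (pochhammer m (n - i) :: nat)"
    using fact_div_poch[of m "n - i"] assms by simp
  then show ?thesis using False by (simp add: tau_coeff_def pochhammer_of_nat)
qed

lemma tau_tens:
  "tau (tens b a) = (\<Sum>m\<le>degree b. \<Sum>n\<le>degree a. smult [:coeff b m * coeff a n:] (tau_basis m n))"
proof -
  have N: "degree (coeff (tens b a) m) \<le> degree a" for m
    unfolding coeff_tens by (rule degree_smult_le)
  show ?thesis unfolding tau_ext[OF degree_tens N] by (simp add: coeff_tens)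
qed



lemma coeff_tau_basis0: "coeff (tau_basis m n) 0 = (monom (pochhammer (of_nat m) n) (m + n) :: 'a::field poly)"
proof -
  have "coeff (tau_basis m n :: 'a poly poly) 0 = (\<Sum>i\<le>n. if i = 0 then monom (tau_coeff m n i) (m + n - i) else 0)"
    unfolding tau_basis_def coeff_sum by (intro sum.cong) auto
  also have "\<dots> = monom (tau_coeff m n 0) (m + n)" by (simp add: sum.delta)
  also have "tau_coeff m n 0 = (pochhammer (of_nat m) n :: 'a)" using tau_coeff_eq[of 0 n m] by simp
  finally show ?thesis .
qed

lemma coeff_tau_tens_monom:
  "coeff (tau (tens b (monom 1 n))) 0 = (dl ^^ n) (b :: 'a::field poly)"
proof -
  have "tau (tens b (monom 1 n)) = (\<Sum>m\<le>degree b. \<Sum>n'\<le>n. smult [:coeff b m * (if n = n' then 1 else 0):] (tau_basis m n'))"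
    unfolding tau_tens by (simp add: degree_monom_eq)
  also have "\<dots> = (\<Sum>m\<le>degree b. smult [:coeff b m:] (tau_basis m n))"
  proof (intro sum.cong refl)
    fix m
    have "\<And>n'. smult [:coeff b m * (if n = n' then 1 else 0):] (tau_basis m n' :: 'a poly poly)
       = (if n = n' then smult [:coeff b m:] (tau_basis m n') else 0)" by simp
    then show "(\<Sum>n'\<le>n. smult [:coeff b m * (if n = n' then 1 else 0):] (tau_basis m n' :: 'a poly poly))
       = smult [:coeff b m:] (tau_basis m n)"
      by (simp only: sum.delta) simp
  qed
  finally have "coeff (tau (tens b (monom 1 n))) 0 = (\<Sum>m\<le>degree b. smult (coeff b m) (coeff (tau_basis m n) 0))"
    by (simp add: coeff_sum)
  also have "\<dots> = (\<Sum>m\<le>degree b. (dl ^^ n) (monom (coeff b m) m))"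
    by (simp add: coeff_tau_basis0 dlpow_monom smult_monom)
  also have "\<dots> = (dl ^^ n) b"
    by (simp add: dlpow_sum[symmetric] poly_as_sum_of_monoms)
  finally show ?thesis .
qed

lemma key0:
  fixes b :: "'a::field poly"
  assumes char: "CHAR('a) = 0" and "b \<noteq> 0"
  shows "\<exists>n. poly ((dl ^^ n) b) 1 \<noteq> 0"
proof (rule ccontr)
  assume "\<not> ?thesis"
  then have H: "\<And>n. poly ((dl ^^ n) b) 1 = 0" by blast
  let ?L = "[:-1, 1:] :: 'a poly"
  have pd: "pderiv ?L = 1" by (simp add: pderiv_pCons)
  have "\<forall>n. ?L ^ Suc k dvd (dl ^^ n) b" for k
  proof (induction k)
    case 0
    then show ?case using H by (simp add: poly_eq_0_iff_dvd)
  next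
    case (Suc k)
    show ?case
    proof
      fix n
      obtain q where q: "(dl ^^ n) b = ?L ^ Suc k * q" using Suc[rule_format, of n] by (elim dvdE)
      have "(dl ^^ Suc n) b = dl (?L ^ Suc k * q)" using q by simp
      also have "\<dots> = ?L ^ Suc k * dl q + ?L ^ k * (monom 1 2 * smult (of_nat (Suc k)) q)"
        unfolding dl_def pderiv_mult pderiv_power_Suc pd
        by (simp add: algebra_simps)
      finally have e: "(dl ^^ Suc n) b = ?L ^ Suc k * dl q + ?L ^ k * (monom 1 2 * smult (of_nat (Suc k)) q)" .
      have "?L ^ Suc k dvd (dl ^^ Suc n) b" using Suc by blast
      then have "?L ^ Suc k dvd ?L ^ k * (monom 1 2 * smult (of_nat (Suc k)) q)"
        unfolding e by (simp add: dvd_add_right_iff)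
      then have "?L ^ k * ?L dvd ?L ^ k * (monom 1 2 * smult (of_nat (Suc k)) q)"
        by (simp add: mult.commute)
      moreover have "?L ^ k \<noteq> 0" by simp
      ultimately have "?L dvd monom 1 2 * smult (of_nat (Suc k)) q"
        using dvd_mult_cancel_left[of "?L ^ k" ?L "monom 1 2 * smult (of_nat (Suc k)) q"] by blast
      then have "poly (monom 1 2 * smult (of_nat (Suc k)) q) 1 = 0"
        using poly_eq_0_iff_dvd[of "monom 1 2 * smult (of_nat (Suc k)) q" 1] by blast
      moreover have "(of_nat (Suc k) :: 'a) \<noteq> 0" using char unfolding CHAR_eq0_iff
        by (metis zero_less_Suc)
      ultimately have "poly q 1 = 0" by (simp add: poly_monom)
      then have "?L dvd q" by (simp add: poly_eq_0_iff_dvd)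
      then have "?L ^ Suc k * ?L dvd ?L ^ Suc k * q" by (intro mult_dvd_mono dvd_refl)
      then show "?L ^ Suc (Suc k) dvd (dl ^^ n) b" unfolding q
        by (simp only: power_Suc2[of ?L "Suc k"])
    qed
  qed
  then have "?L ^ Suc (degree b) dvd b" by (metis funpow_0)
  then have "degree (?L ^ Suc (degree b)) \<le> degree b"
    using assms(2) by (rule dvd_imp_degree_le)
  then show False by (simp only: degree_linear_power)
qed

definition U0 :: "'a::field poly poly set" where
  "U0 = {t. poly (coeff t 0) 1 = 0}"

lemma BO_U0: "BO U0"
proof -
  have k: "ksub tsc U0" unfolding ksub_def U0_def tsc_def by simp
  have 1: "\<forall>h a. tens ([:0, 1:] * h) a \<in> (U0 :: 'a::field poly poly set)"
    unfolding U0_def by (simp add: coeff_tens)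
  have 2: "\<forall>b h. tens b ([:-1, 1:] * h) \<in> (U0 :: 'a::field poly poly set)"
    unfolding U0_def by (simp add: coeff_tens)
  have 3: "[:0, 1:] \<noteq> (0 :: 'a poly)" "[:-1, 1:] \<noteq> (0 :: 'a poly)" by simp_all
  show ?thesis unfolding BO_iff using k 1 2 3 by blast
qed

lemma not_cont0:
  assumes char: "CHAR('a) = 0"
  shows "\<not> (\<exists>V. BO V \<and> tau ` V \<subseteq> (U0 :: 'a::field poly poly set))"
proof
  assume "\<exists>V. BO V \<and> tau ` V \<subseteq> (U0 :: 'a poly poly set)"
  then obtain V :: "'a poly poly set" where V: "BO V" "tau ` V \<subseteq> U0" by blast
  then obtain f where f: "f \<noteq> 0" "\<forall>h a. tens (f * h) a \<in> V" unfolding BO_iff by blast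
  obtain n where n: "poly ((dl ^^ n) f) 1 \<noteq> 0" using key0[OF char f(1)] by blast
  have "tens f (monom 1 n) \<in> V" using f(2)[rule_format, of 1] by simp
  then have "tau (tens f (monom 1 n)) \<in> U0" using V(2) by blast
  then show False using n unfolding U0_def by (simp add: coeff_tau_tens_monom)
qed



lemma fact_nz:
  assumes "k < CHAR('a::field)"
  shows "(of_nat (fact k) :: 'a) \<noteq> 0"
  using assms
proof (induction k)
  case 0 then show ?case by simp
next
  case (Suc k)
  have "\<not> CHAR('a) dvd Suc k" using Suc.prems by (auto dest: dvd_imp_le)
  then have "(of_nat (Suc k) :: 'a) \<noteq> 0" using of_nat_eq_0_iff_char_dvd[of "Suc k", where 'a='a] by blast
  moreover have "(of_nat (fact k) :: 'a) \<noteq> 0" using Suc by simp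
  ultimately show ?case by (simp only: fact_Suc of_nat_mult) simp
qed

lemma poch_zero:
  assumes p: "CHAR('a::field) > 0" and k: "k \<ge> CHAR('a)"
  shows "pochhammer (of_nat m :: 'a) k = 0"
proof -
  let ?p = "CHAR('a)"
  define i0 where "i0 = (?p - m mod ?p) mod ?p"
  have i0: "i0 < k" unfolding i0_def using p k by (meson mod_less_divisor order_less_le_trans)
  have "(m + i0) mod ?p = 0" unfolding i0_def using p
    by (metis add_diff_inverse_nat mod_add_left_eq mod_add_right_eq mod_less_divisor mod_self not_less_iff_gr_or_eq)
  then have "CHAR('a) dvd m + i0" by (simp add: mod_eq_0_iff_dvd)
  then have "(of_nat (m + i0) :: 'a) = 0" using of_nat_eq_0_iff_char_dvd[of "m + i0", where 'a='a] by blast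
  then have "(of_nat m + of_nat i0 :: 'a) = 0" by simp
  then show ?thesis unfolding pochhammer_prod using i0
    by (intro prod_zero) auto
qed

lemma basis_formula:
  assumes p: "CHAR('a::field) > 0"
  shows "smult [:c * d:] (tau_basis m n :: 'a poly poly) =
    (\<Sum>k<CHAR('a). tens (smult (inverse (of_nat (fact k))) (monom (d * of_nat (fact k * (n choose k))) (n - k)))
                          (monom (c * pochhammer (of_nat m) k) (m + k)))"
proof -
  let ?p = "CHAR('a)"
  define T where "T k = (monom (monom (c * d * of_nat (n choose k) * pochhammer (of_nat m) k) (m + k)) (n - k) :: 'a poly poly)" for k
  have "(\<Sum>k<?p. tens (smult (inverse (of_nat (fact k))) (monom (d * of_nat (fact k * (n choose k))) (n - k)))
                          (monom (c * pochhammer (of_nat m) k) (m + k))) = (\<Sum>k<?p. T k)"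
  proof (intro sum.cong refl)
    fix k assume "k \<in> {..<?p}"
    then have nz: "(of_nat (fact k) :: 'a) \<noteq> 0" by (intro fact_nz) simp
    show "tens (smult (inverse (of_nat (fact k))) (monom (d * of_nat (fact k * (n choose k))) (n - k)))
                          (monom (c * pochhammer (of_nat m) k) (m + k)) = T k"
      unfolding T_def smult_monom tens_monom using nz
      by (simp add: of_nat_mult field_simps)
  qed
  also have "\<dots> = (\<Sum>k\<in>{..<?p} \<inter> {..n}. T k)"
  proof (intro sum.mono_neutral_right ballI)
    fix k assume "k \<in> {..<?p} - {..<?p} \<inter> {..n}"
    then have "n < k" by auto
    then have z: "n choose k = 0" by simp
    show "T k = 0" unfolding T_def z by simp
  qed auto
  also have "\<dots> = (\<Sum>k\<le>n. T k)"
  proof (intro sum.mono_neutral_left ballI)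
    fix k assume "k \<in> {..n} - {..<?p} \<inter> {..n}"
    then have "k \<ge> ?p" by auto
    then have z: "pochhammer (of_nat m :: 'a) k = 0" using poch_zero[OF p] by blast
    show "T k = 0" unfolding T_def z by simp
  qed auto
  also have "\<dots> = (\<Sum>k\<in>{0..n}. T (n + 0 - k))"
    by (subst sum.atLeastAtMost_rev) (simp add: atLeast0AtMost)
  also have "\<dots> = (\<Sum>i\<le>n. monom (monom (c * d * tau_coeff m n i) (m + n - i)) i)"
    unfolding atLeast0AtMost
  proof (intro sum.cong refl)
    fix i assume i: "i \<in> {..n}"
    then have "i \<le> n" by simp
    then show "T (n + 0 - i) = monom (monom (c * d * tau_coeff m n i) (m + n - i)) i"
      unfolding T_def tau_coeff_eq[OF \<open>i \<le> n\<close>]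
      by (simp add: binomial_symmetric[OF \<open>i \<le> n\<close>, symmetric] mult.assoc)
  qed
  also have "\<dots> = smult [:c * d:] (tau_basis m n)"
    unfolding tau_basis_def smult_sum_right by (simp add: smult_monom)
  finally show ?thesis by simp
qed



lemma formula_p:
  fixes a b :: "'a::field poly"
  assumes p: "CHAR('a) > 0"
  shows "tau (tens b a) = (\<Sum>k<CHAR('a). tens (smult (inverse (of_nat (fact k))) ((pderiv ^^ k) a)) ((dl ^^ k) b))"
proof -
  let ?p = "CHAR('a)"
  let ?c = "\<lambda>k. inverse (of_nat (fact k) :: 'a)"
  let ?F = "\<lambda>k n m. tens (smult (?c k) ((pderiv ^^ k) (monom (coeff a n) n))) ((dl ^^ k) (monom (coeff b m) m))"
  have "(\<Sum>k<?p. tens (smult (?c k) ((pderiv ^^ k) a)) ((dl ^^ k) b))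
      = (\<Sum>k<?p. tens (smult (?c k) ((pderiv ^^ k) (\<Sum>n\<le>degree a. monom (coeff a n) n)))
                      ((dl ^^ k) (\<Sum>m\<le>degree b. monom (coeff b m) m)))"
    by (simp only: poly_as_sum_of_monoms)
  also have "\<dots> = (\<Sum>k<?p. \<Sum>m\<le>degree b. \<Sum>n\<le>degree a. ?F k n m)"
    by (simp only: higher_pderiv_sum dlpow_sum smult_sum_right tens_sum_left tens_sum_right)
  also have "\<dots> = (\<Sum>m\<le>degree b. \<Sum>k<?p. \<Sum>n\<le>degree a. ?F k n m)"
    by (rule sum.swap)
  also have "\<dots> = (\<Sum>m\<le>degree b. \<Sum>n\<le>degree a. \<Sum>k<?p. ?F k n m)"
    by (intro sum.cong refl sum.swap)
  also have "\<dots> = (\<Sum>m\<le>degree b. \<Sum>n\<le>degree a. smult [:coeff b m * coeff a n:] (tau_basis m n))"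
    by (intro sum.cong refl) (simp only: pdpow_monom dlpow_monom basis_formula[OF p])
  also have "\<dots> = tau (tens b a)" by (simp only: tau_tens)
  finally show ?thesis by simp
qed

lemma pderiv_ppow: "pderiv ((f :: 'a::field poly) ^ CHAR('a)) = 0"
  by (simp add: pderiv_power)

lemma pdpow_ppow:
  "(pderiv ^^ k) ((f :: 'a::field poly) ^ CHAR('a) * h) = f ^ CHAR('a) * (pderiv ^^ k) h"
proof (induction k)
  case 0 then show ?case by simp
next
  case (Suc k)
  have "(pderiv ^^ Suc k) (f ^ CHAR('a) * h) = pderiv (f ^ CHAR('a) * (pderiv ^^ k) h)"
    using Suc by simp
  also have "\<dots> = f ^ CHAR('a) * pderiv ((pderiv ^^ k) h)"
    by (simp only: pderiv_mult pderiv_ppow mult_zero_right add_0_right)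
  finally show ?case by simp
qed

lemma dlpow_ppow:
  "(dl ^^ k) ((f :: 'a::field poly) ^ CHAR('a) * h) = f ^ CHAR('a) * (dl ^^ k) h"
proof (induction k)
  case 0 then show ?case by simp
next
  case (Suc k)
  have "(dl ^^ Suc k) (f ^ CHAR('a) * h) = dl (f ^ CHAR('a) * (dl ^^ k) h)"
    using Suc by simp
  also have "\<dots> = monom 1 2 * (f ^ CHAR('a) * pderiv ((dl ^^ k) h))"
    unfolding dl_def by (simp only: pderiv_mult pderiv_ppow mult_zero_right add_0_right)
  also have "\<dots> = f ^ CHAR('a) * dl ((dl ^^ k) h)"
    unfolding dl_def by (simp only: mult.left_commute)
  finally show ?case by simp
qed

lemma tau_0: "tau 0 = (0 :: 'a::field poly poly)"
  unfolding tau_def by simp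

lemma cont_p:
  assumes p: "CHAR('a::field) > 0" and U: "BO (U :: 'a poly poly set)"
  shows "\<exists>V. BO V \<and> tau ` V \<subseteq> U"
proof -
  let ?p = "CHAR('a)"
  obtain f g where fg: "ksub tsc U" "f \<noteq> 0" "g \<noteq> 0" "\<forall>h a. tens (f * h) a \<in> U" "\<forall>b h. tens b (g * h) \<in> U"
    using U unfolding BO_iff by blast
  define V where "V = {t. tau t \<in> U}"
  have kV: "ksub tsc V" unfolding ksub_def V_def
  proof (intro conjI ballI allI impI)
    show "0 \<in> {t. tau t \<in> U}" using ksub_0[OF fg(1)] by (simp add: tau_0)
  next
    fix u v assume "u \<in> {t. tau t \<in> U}" "v \<in> {t. tau t \<in> U}"
    then show "u + v \<in> {t. tau t \<in> U}" using ksub_add[OF fg(1)] by (simp add: tau_add)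
  next
    fix c u assume "u \<in> {t. tau t \<in> U}"
    then show "tsc c u \<in> {t. tau t \<in> U}" using ksub_sc[OF fg(1)] by (simp add: tau_tsc)
  qed
  have gp: "g ^ ?p = g * g ^ (?p - 1)" using p by (cases "CHAR('a)") simp_all
  have fp: "f ^ ?p = f * f ^ (?p - 1)" using p by (cases "CHAR('a)") simp_all
  have 1: "tens (g ^ ?p * h) a \<in> V" for h a
  proof -
    have "tau (tens (g ^ ?p * h) a) \<in> U" unfolding formula_p[OF p]
    proof (rule ksub_sum[OF fg(1)])
      fix k
      have "(dl ^^ k) (g ^ ?p * h) = g * (g ^ (?p - 1) * (dl ^^ k) h)"
        by (simp only: dlpow_ppow) (simp only: gp mult.assoc)
      then show "tens (smult (inverse (of_nat (fact k))) ((pderiv ^^ k) a)) ((dl ^^ k) (g ^ ?p * h)) \<in> U"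
        using fg(5) by (simp only:)
    qed
    then show ?thesis unfolding V_def by simp
  qed
  have 2: "tens b (f ^ ?p * h) \<in> V" for b h
  proof -
    have "tau (tens b (f ^ ?p * h)) \<in> U" unfolding formula_p[OF p]
    proof (rule ksub_sum[OF fg(1)])
      fix k
      have "smult (inverse (of_nat (fact k))) ((pderiv ^^ k) (f ^ ?p * h)) = f * smult (inverse (of_nat (fact k))) (f ^ (?p - 1) * (pderiv ^^ k) h)"
        by (simp only: pdpow_ppow) (simp only: fp mult.assoc mult_smult_right)
      then show "tens (smult (inverse (of_nat (fact k))) ((pderiv ^^ k) (f ^ ?p * h))) ((dl ^^ k) b) \<in> U"
        using fg(4) by (simp only:)
    qed
    then show ?thesis unfolding V_def by simp
  qed
  have "g ^ ?p \<noteq> 0" "f ^ ?p \<noteq> 0" using fg(2,3) by simp_all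
  then have "BO V" unfolding BO_iff
    using kV 1 2 by (intro conjI exI[where x="g ^ ?p"] exI[where x="f ^ ?p"]) (simp_all only: simp_thms)
  moreover have "tau ` V \<subseteq> U" unfolding V_def by auto
  ultimately show ?thesis by blast
qed


theorem lemma5p2:
  shows "continuous_map
           (linear_topology (bang_open cofinite_open cofinite_open))
           (linear_topology (bang_open cofinite_open cofinite_open))
           (tau :: 'a::field poly poly \<Rightarrow> 'a poly poly)
         \<longleftrightarrow> CHAR('a) > 0"
proof -
  have "continuous_map (linear_topology BO) (linear_topology BO) (tau :: 'a poly poly \<Rightarrow> 'a poly poly)
        \<longleftrightarrow> (\<forall>U. BO U \<longrightarrow> (\<exists>V. BO V \<and> tau ` V \<subseteq> (U :: 'a poly poly set)))"
    by (rule cont_iff[OF tau_add])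
  also have "\<dots> \<longleftrightarrow> CHAR('a) > 0"
  proof
    assume H: "\<forall>U. BO U \<longrightarrow> (\<exists>V. BO V \<and> tau ` V \<subseteq> (U :: 'a poly poly set))"
    show "CHAR('a) > 0"
    proof (rule ccontr)
      assume "\<not> CHAR('a) > 0"
      then have "CHAR('a) = 0" by simp
      then show False using H BO_U0[where 'a='a] not_cont0[where 'a='a] by blast
    qed
  next
    assume "CHAR('a) > 0"
    then show "\<forall>U. BO U \<longrightarrow> (\<exists>V. BO V \<and> tau ` V \<subseteq> (U :: 'a poly poly set))"
      using cont_p by blast
  qed
  finally show ?thesis .
qed

end
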